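(* Let $\mathcal{A}$ be a collection of pairwise non-parallel hyperplanes in $Q=S_1\times\cdots\times S_n$, let $0\le a\le n$, let $\mathbb{P}_a$ be a probability measure on $Q_a$, let $\delta_{a+1},\dots,\delta_n\in[0,1/2]$, and let $\mathbb{P}_k$, $\alpha_k$ be defined as in the context. Then for every $a<k\le n$ and every $t\in\mathbb{N}$, $$\mathbb{E}_{k-1}\big[\alpha_k(x)^t\big]\le\frac{1}{|S_k|^t}\sum_{F_1,\dots,F_t\in\mathcal{N}_k} c\big((F_1\cup\cdots\cup F_t)\cap[a]\big)\cdot\nu\big((F_1\cup\cdots\cup F_t)\cap[a+1,k-1]\big).$$
   Context: $S_1,\dots,S_n$ are finite sets each with at least two elements; $Q_k = S_1\times\cdots\times S_k$. A hyperplane is $A = A_1\times\cdots\times A_n\subseteq Q$ with each $A_k$ either $S_k$ or a singleton in $S_k$; $F(A)=\{k: A_k\text{ is a singleton}\}$; hyperplanes are parallel if they have the same $F$. Hyperplanes in $\mathcal{A}$ have non-empty $F(A)$; write $\mathcal{A}=\{A_F:F\in\mathcal{F}\}$. A set $X\subseteq Q_k$ is identified with $X\times S_{k+1}\times\cdots\times S_n$; a hyperplane with $F(A)\subseteq[k]$ is viewed as a subset of $Q_k$. Let $\mathcal{F}_k=\{F\in\mathcal{F}:F\subseteq[k]\}$, $\mathcal{N}_k=\mathcal{F}_k\setminus\mathcal{F}_{k-1}$, $B_k=\bigcup_{F\in\mathcal{N}_k}A_F\subseteq Q_k$. For $k>a$, given $\mathbb{P}_{k-1}$ on $Q_{k-1}$,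 let $\alpha_k(x)=|\{y\in S_k:(x,y)\in B_k\}|/|S_k|$ for $x\in Q_{k-1}$, and define $\mathbb{P}_k(x,y)=\max\{0,\frac{\alpha_k(x)-\delta_k}{\alpha_k(x)(1-\delta_k)}\}\frac{\mathbb{P}_{k-1}(x)}{|S_k|}$ if $(x,y)\in B_k$ and $\mathbb{P}_k(x,y)=\min\{\frac{1}{1-\alpha_k(x)},\frac{1}{1-\delta_k}\}\frac{\mathbb{P}_{k-1}(x)}{|S_k|}$ otherwise. $\mathbb{E}_{k-1}$ is expectation over $x\sim\mathbb{P}_{k-1}$. For $I\subseteq[a]$, $c(I)=\max\{\mathbb{P}_a(H):H\text{ a hyperplane in }Q_a\text{ with }F(H)=I\}$ (so $c(\emptyset)=1$); for $J\subseteq[a+1,n]$, $\nu(J)=\prod_{j\in J}\frac{1}{(1-\delta_j)|S_j|}$ (so $\nu(\emptyset)=1$). *)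

theory Defs
  imports Complex_Main "HOL-Library.FuncSet"
begin

definition Qk :: "(nat \<Rightarrow> 'a set) \<Rightarrow> nat \<Rightarrow> (nat \<Rightarrow> 'a) set" where
  "Qk S k = PiE {1..k} S"

definition hyp :: "(nat \<Rightarrow> 'a set) \<Rightarrow> nat \<Rightarrow> nat set \<Rightarrow> (nat \<Rightarrow> 'a) \<Rightarrow> (nat \<Rightarrow> 'a) set" where
  "hyp S k F w = {x \<in> Qk S k. \<forall>i\<in>F. x i = w i}"

definition Nk :: "nat set set \<Rightarrow> nat \<Rightarrow> nat set set" where
  "Nk \<F> k = {F \<in> \<F>. F \<subseteq> {1..k} \<and> \<not> F \<subseteq> {1..k-1}}"

text \<open>B_k: union of A_F over F in N_k; A_F is the hyperplane with F(A_F)=F and values v F.\<close>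
definition Bk :: "(nat \<Rightarrow> 'a set) \<Rightarrow> nat set set \<Rightarrow> (nat set \<Rightarrow> nat \<Rightarrow> 'a) \<Rightarrow> nat \<Rightarrow> (nat \<Rightarrow> 'a) set" where
  "Bk S \<F> v k = (\<Union>F\<in>Nk \<F> k. hyp S k F (v F))"

definition alpha :: "(nat \<Rightarrow> 'a set) \<Rightarrow> nat set set \<Rightarrow> (nat set \<Rightarrow> nat \<Rightarrow> 'a) \<Rightarrow> nat \<Rightarrow> (nat \<Rightarrow> 'a) \<Rightarrow> real" where
  "alpha S \<F> v k x = real (card {y \<in> S k. x(k := y) \<in> Bk S \<F> v k}) / real (card (S k))"

text \<open>The measures P_k (as probability mass functions on Q_k); P_k = P_a for k \<le> a.\<close>
primrec Pk :: "(nat \<Rightarrow> 'a set) \<Rightarrow> nat set set \<Rightarrow> (nat set \<Rightarrow> nat \<Rightarrow> 'a) \<Rightarrow> (nat \<Rightarrow> real) \<Rightarrow> nat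
    \<Rightarrow> ((nat \<Rightarrow> 'a) \<Rightarrow> real) \<Rightarrow> nat \<Rightarrow> ((nat \<Rightarrow> 'a) \<Rightarrow> real)" where
  "Pk S \<F> v \<delta> a Pa 0 = Pa"
| "Pk S \<F> v \<delta> a Pa (Suc j) =
     (if Suc j \<le> a then Pa else
      (\<lambda>z. let x = restrict z {1..j}; al = alpha S \<F> v (Suc j) x in
         (if z \<in> Bk S \<F> v (Suc j)
          then max 0 ((al - \<delta> (Suc j)) / (al * (1 - \<delta> (Suc j))))
          else min (1 / (1 - al)) (1 / (1 - \<delta> (Suc j))))
         * Pk S \<F> v \<delta> a Pa j x / real (card (S (Suc j)))))"

definition cI :: "(nat \<Rightarrow> 'a set) \<Rightarrow> nat \<Rightarrow> ((nat \<Rightarrow> 'a) \<Rightarrow> real) \<Rightarrow> nat set \<Rightarrow> real" where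
  "cI S a Pa I = Max ((\<lambda>w. \<Sum>x\<in>hyp S a I w. Pa x) ` PiE I S)"

definition nu :: "(nat \<Rightarrow> 'a set) \<Rightarrow> (nat \<Rightarrow> real) \<Rightarrow> nat set \<Rightarrow> real" where
  "nu S \<delta> J = (\<Prod>j\<in>J. 1 / ((1 - \<delta> j) * real (card (S j))))"

end

theory Submission
  imports Defs
begin

lemma Qk_Suc: "Qk S (Suc j) = (\<lambda>(y, g). g(Suc j := y)) ` (S (Suc j) \<times> Qk S j)"
  unfolding Qk_def using PiE_insert_eq[of "Suc j" "{1..j}" S]
  by (simp add: atLeastAtMostSuc_conv)

lemma sum_Qk_Suc:
  assumes "finite (S (Suc j))" "finite (Qk S j)"
  shows "(\<Sum>z\<in>Qk S (Suc j). g z) = (\<Sum>x\<in>Qk S j. \<Sum>y\<in>S (Suc j). g (x(Suc j := y)))"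
proof -
  have inj: "inj_on (\<lambda>(y, g). g(Suc j := y)) (S (Suc j) \<times> Qk S j)"
    unfolding Qk_def by (rule inj_combinator) simp
  have "(\<Sum>z\<in>Qk S (Suc j). g z) = (\<Sum>(y,x)\<in>S (Suc j) \<times> Qk S j. g (x(Suc j := y)))"
    unfolding Qk_Suc by (subst sum.reindex[OF inj]) (simp add: case_prod_beta)
  also have "\<dots> = (\<Sum>y\<in>S (Suc j). \<Sum>x\<in>Qk S j. g (x(Suc j := y)))"
    by (rule sum.cartesian_product[symmetric])
  also have "\<dots> = (\<Sum>x\<in>Qk S j. \<Sum>y\<in>S (Suc j). g (x(Suc j := y)))"
    by (rule sum.swap)
  finally show ?thesis .
qed

lemma restrict_upd: "x \<in> Qk S j \<Longrightarrow> restrict (x(Suc j := y)) {1..j} = x"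
  unfolding Qk_def by (auto simp: restrict_def PiE_def extensional_def fun_eq_iff)

lemma upd_in_Qk: "x \<in> Qk S j \<Longrightarrow> y \<in> S (Suc j) \<Longrightarrow> x(Suc j := y) \<in> Qk S (Suc j)"
  unfolding Qk_Suc by auto

lemma hyp_upd:
  assumes "x \<in> Qk S j" "y \<in> S (Suc j)"
  shows "x(Suc j := y) \<in> hyp S (Suc j) U w \<longleftrightarrow>
     x \<in> hyp S j (U - {Suc j}) w \<and> (Suc j \<in> U \<longrightarrow> y = w (Suc j))"
  using assms upd_in_Qk[OF assms] unfolding hyp_def by auto

lemma Pk_a: "Pk S \<F> v \<delta> a Pa a = Pa"
  by (cases a) auto

lemma Pk_Suc: "a \<le> j \<Longrightarrow> x \<in> Qk S j \<Longrightarrow>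
  Pk S \<F> v \<delta> a Pa (Suc j) (x(Suc j := y)) =
   (if x(Suc j := y) \<in> Bk S \<F> v (Suc j)
          then max 0 ((alpha S \<F> v (Suc j) x - \<delta> (Suc j)) / (alpha S \<F> v (Suc j) x * (1 - \<delta> (Suc j))))
          else min (1 / (1 - alpha S \<F> v (Suc j) x)) (1 / (1 - \<delta> (Suc j))))
         * Pk S \<F> v \<delta> a Pa j x / real (card (S (Suc j)))"
  by (simp add: restrict_upd[of x S j y, simplified] Let_def)

lemma fac_bounds:
  fixes al d :: real
  assumes "0 \<le> al" "al \<le> 1" "0 \<le> d" "d < 1"
  shows "0 \<le> max 0 ((al - d) / (al * (1 - d)))"
    "max 0 ((al - d) / (al * (1 - d))) \<le> 1 / (1 - d)"
    "0 \<le> min (1 / (1 - al)) (1 / (1 - d))"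
    "min (1 / (1 - al)) (1 / (1 - d)) \<le> 1 / (1 - d)"
    "al * max 0 ((al - d) / (al * (1 - d))) + (1 - al) * min (1 / (1 - al)) (1 / (1 - d)) \<le> 1"
proof -
  show "0 \<le> max 0 ((al - d) / (al * (1 - d)))" by simp
  show "min (1 / (1 - al)) (1 / (1 - d)) \<le> 1 / (1 - d)" by simp
  show "0 \<le> min (1 / (1 - al)) (1 / (1 - d))" using assms by simp
  show "max 0 ((al - d) / (al * (1 - d))) \<le> 1 / (1 - d)"
  proof (cases "al = 0")
    case False
    then have "(al - d) / (al * (1 - d)) = ((al - d)/al) / (1 - d)" by simp
    also have "\<dots> \<le> 1 / (1 - d)" using assms False
      by (intro divide_right_mono) (auto simp: divide_le_eq)
    finally show ?thesis using assms by simp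
  qed (use assms in simp)
  show "al * max 0 ((al - d) / (al * (1 - d))) + (1 - al) * min (1 / (1 - al)) (1 / (1 - d)) \<le> 1"
  proof (cases "al \<le> d")
    case True
    then have "al < 1" using assms by simp
    have "(al - d) / (al * (1 - d)) \<le> 0"
      using True assms by (intro divide_nonpos_nonneg) auto
    then have "max 0 ((al - d) / (al * (1 - d))) = 0" by simp
    moreover have "(1 - al) * min (1 / (1 - al)) (1 / (1 - d)) \<le> (1 - al) * (1 / (1 - al))"
      using \<open>al < 1\<close> by (intro mult_left_mono) auto
    ultimately show ?thesis using \<open>al < 1\<close> by simp
  next
    case False
    then have "al > 0" using assms by simp
    have "max 0 ((al - d) / (al * (1 - d))) = (al - d) / (al * (1 - d))"
      using False assms by (auto simp: max_def)
    moreover have "(1 - al) * min (1 / (1 - al)) (1 / (1 - d)) \<le> (1 - al) * (1 / (1 - d))"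
      using assms by (intro mult_left_mono) auto
    moreover have "al * ((al - d) / (al * (1 - d))) + (1 - al) * (1 / (1 - d)) = 1"
    proof -
      have d1: "1 - d \<noteq> 0" using assms by simp
      have "al * ((al - d) / (al * (1 - d))) = (al - d) / (1 - d)" using \<open>al > 0\<close> by simp
      then show ?thesis using d1 by (simp add: field_simps)
    qed
    ultimately show ?thesis by linarith
  qed
qed


locale L3 =
  fixes S :: "nat \<Rightarrow> 'a set" and n a :: nat
    and \<F> :: "nat set set" and v :: "nat set \<Rightarrow> nat \<Rightarrow> 'a"
    and \<delta> :: "nat \<Rightarrow> real" and Pa :: "(nat \<Rightarrow> 'a) \<Rightarrow> real"
  assumes S: "\<And>i. i \<in> {1..n} \<Longrightarrow> finite (S i) \<and> card (S i) \<ge> 2"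
    and F: "\<And>F. F \<in> \<F> \<Longrightarrow> F \<noteq> {} \<and> F \<subseteq> {1..n}"
    and v: "\<And>F i. F \<in> \<F> \<Longrightarrow> i \<in> F \<Longrightarrow> v F i \<in> S i"
    and a: "a \<le> n"
    and Pa_nonneg: "\<And>x. x \<in> Qk S a \<Longrightarrow> Pa x \<ge> 0"
    and \<delta>: "\<And>j. j \<in> {a+1..n} \<Longrightarrow> 0 \<le> \<delta> j \<and> \<delta> j \<le> 1/2"
begin

abbreviation "P \<equiv> Pk S \<F> v \<delta> a Pa"

lemma finite_Qk: "j \<le> n \<Longrightarrow> finite (Qk S j)"
  unfolding Qk_def using S by (intro finite_PiE) auto

lemma cardS: "i \<in> {1..n} \<Longrightarrow> real (card (S i)) > 0"
  using S[of i] by auto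

lemma alpha_bounds: "Suc j \<le> n \<Longrightarrow> 0 \<le> alpha S \<F> v (Suc j) x \<and> alpha S \<F> v (Suc j) x \<le> 1"
  unfolding alpha_def using cardS[of "Suc j"] S[of "Suc j"]
  by (auto simp: divide_le_eq intro!: card_mono)

lemma step_pt:
  assumes "a \<le> j" "Suc j \<le> n" "x \<in> Qk S j" "P j x \<ge> 0"
  shows "0 \<le> P (Suc j) (x(Suc j := y))"
    "P (Suc j) (x(Suc j := y)) \<le> P j x / ((1 - \<delta> (Suc j)) * real (card (S (Suc j))))"
proof -
  let ?al = "alpha S \<F> v (Suc j) x" and ?d = "\<delta> (Suc j)" and ?s = "real (card (S (Suc j)))"
  have al: "0 \<le> ?al" "?al \<le> 1" using alpha_bounds[OF assms(2)] by auto
  have d: "0 \<le> ?d" "?d < 1" using \<delta>[of "Suc j"] assms by auto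
  have s: "?s > 0" using cardS[of "Suc j"] assms by auto
  note fb = fac_bounds[OF al d]
  define f where "f = (if x(Suc j := y) \<in> Bk S \<F> v (Suc j)
          then max 0 ((?al - ?d) / (?al * (1 - ?d)))
          else min (1 / (1 - ?al)) (1 / (1 - ?d)))"
  have f: "0 \<le> f" "f \<le> 1 / (1 - ?d)" unfolding f_def using fb by auto
  have eq: "P (Suc j) (x(Suc j := y)) = f * P j x / ?s"
    unfolding f_def using Pk_Suc[OF assms(1,3)] by simp
  show "0 \<le> P (Suc j) (x(Suc j := y))" unfolding eq using f s assms(4) by simp
  have "f * P j x / ?s \<le> (1 / (1 - ?d)) * P j x / ?s"
    using f s assms(4) by (intro divide_right_mono mult_right_mono) auto
  then show "P (Suc j) (x(Suc j := y)) \<le> P j x / ((1 - ?d) * ?s)" unfolding eq by simp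
qed

lemma step_sum:
  assumes "a \<le> j" "Suc j \<le> n" "x \<in> Qk S j" "P j x \<ge> 0"
  shows "(\<Sum>y\<in>S (Suc j). P (Suc j) (x(Suc j := y))) \<le> P j x"
proof -
  let ?al = "alpha S \<F> v (Suc j) x" and ?d = "\<delta> (Suc j)" and ?s = "real (card (S (Suc j)))"
  have al: "0 \<le> ?al" "?al \<le> 1" using alpha_bounds[OF assms(2)] by auto
  have d: "0 \<le> ?d" "?d < 1" using \<delta>[of "Suc j"] assms by auto
  have s: "?s > 0" using cardS[of "Suc j"] assms by auto
  have fin: "finite (S (Suc j))" using S[of "Suc j"] assms by auto
  note fb = fac_bounds[OF al d]
  define f1 where "f1 = max 0 ((?al - ?d) / (?al * (1 - ?d)))"
  define f2 where "f2 = min (1 / (1 - ?al)) (1 / (1 - ?d))"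
  define B where "B = {y \<in> S (Suc j). x(Suc j := y) \<in> Bk S \<F> v (Suc j)}"
  have alB: "?al = real (card B) / ?s" unfolding alpha_def B_def by simp
  have BS: "B \<subseteq> S (Suc j)" unfolding B_def by auto
  have cB: "real (card (S (Suc j) - B)) = ?s - real (card B)"
    using BS fin by (simp add: card_Diff_subset card_mono of_nat_diff finite_subset)
  have "(\<Sum>y\<in>S (Suc j). P (Suc j) (x(Suc j := y)))
      = (\<Sum>y\<in>S (Suc j). (if x(Suc j := y) \<in> Bk S \<F> v (Suc j) then f1 else f2) * (P j x / ?s))"
    using Pk_Suc[OF assms(1,3)] unfolding f1_def f2_def by (intro sum.cong) auto
  also have "\<dots> = (\<Sum>y\<in>S (Suc j). (if x(Suc j := y) \<in> Bk S \<F> v (Suc j) then f1 else f2)) * (P j x / ?s)"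
    by (rule sum_distrib_right[symmetric])
  also have "(\<Sum>y\<in>S (Suc j). (if x(Suc j := y) \<in> Bk S \<F> v (Suc j) then f1 else f2))
      = real (card B) * f1 + real (card (S (Suc j) - B)) * f2"
  proof -
    have e1: "S (Suc j) \<inter> {y. x(Suc j := y) \<in> Bk S \<F> v (Suc j)} = B" unfolding B_def by auto
    have e2: "S (Suc j) \<inter> - {y. x(Suc j := y) \<in> Bk S \<F> v (Suc j)} = S (Suc j) - B" unfolding B_def by auto
    show ?thesis by (simp only: sum.If_cases[OF fin] e1 e2 sum_constant)
  qed
  also have "\<dots> = ?s * (?al * f1 + (1 - ?al) * f2)"
    unfolding cB alB using s by (simp add: field_simps)
  also have "\<dots> * (P j x / ?s) = (?al * f1 + (1 - ?al) * f2) * P j x" using s by simp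
  also have "\<dots> \<le> 1 * P j x" using fb(5) assms(4) unfolding f1_def f2_def
    by (intro mult_right_mono) auto
  finally show ?thesis by (simp only: mult_1)
qed

lemma Pk_a': "P a = Pa" by (rule Pk_a)

lemma nonneg: "a + d \<le> n \<Longrightarrow> x \<in> Qk S (a + d) \<Longrightarrow> P (a + d) x \<ge> 0"
proof (induction d arbitrary: x)
  case 0
  then show ?case using Pa_nonneg by (simp add: Pk_a)
next
  case (Suc d)
  obtain y z where z: "x = z(Suc (a + d) := y)" "y \<in> S (Suc (a+d))" "z \<in> Qk S (a+d)"
    using Suc.prems(2) unfolding add_Suc_right Qk_Suc by auto
  show ?case unfolding add_Suc_right z(1)
    by (rule step_pt(1)) (use Suc z in auto)
qed


lemma cI_bound:
  assumes "U \<subseteq> {1..a}"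
  shows "(\<Sum>x\<in>hyp S a U w. Pa x) \<le> cI S a Pa U"
proof -
  have finU: "finite U" using assms finite_subset by blast
  have fin: "finite ((\<lambda>w. \<Sum>x\<in>hyp S a U w. Pa x) ` PiE U S)"
    using S assms a finU by (intro finite_imageI finite_PiE) auto
  have hypQ: "hyp S a U w' \<subseteq> Qk S a" for w' unfolding hyp_def by auto
  have nn: "0 \<le> (\<Sum>x\<in>hyp S a U w'. Pa x)" for w'
    using hypQ Pa_nonneg by (intro sum_nonneg) auto
  show ?thesis
  proof (cases "restrict w U \<in> PiE U S")
    case True
    have "hyp S a U w = hyp S a U (restrict w U)" unfolding hyp_def by auto
    then show ?thesis unfolding cI_def using True fin by (auto intro!: Max_ge)
  next
    case False
    then obtain i where i: "i \<in> U" "w i \<notin> S i" by (auto simp: PiE_def Pi_def)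
    have "x \<notin> hyp S a U w" for x
    proof
      assume "x \<in> hyp S a U w"
      then have "x \<in> PiE {1..a} S" "x i = w i" using i unfolding hyp_def Qk_def by auto
      moreover have "i \<in> {1..a}" using i assms by auto
      ultimately show False using i by (metis PiE_mem)
    qed
    then have "hyp S a U w = {}" by blast
    moreover have "PiE U S \<noteq> {}" using S assms a by (subst PiE_eq_empty_iff) fastforce
    then obtain w0 where "w0 \<in> PiE U S" by blast
    then have "0 \<le> cI S a Pa U" unfolding cI_def using fin nn
      by (intro order.trans[OF nn[of w0]] Max_ge) auto
    ultimately show ?thesis by simp
  qed
qed

lemma nu_insert: "finite J \<Longrightarrow> j \<notin> J \<Longrightarrow>
  nu S \<delta> (insert j J) = nu S \<delta> J / ((1 - \<delta> j) * real (card (S j)))"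
  unfolding nu_def by simp

lemma nu_nonneg: "J \<subseteq> {a+1..n} \<Longrightarrow> nu S \<delta> J \<ge> 0"
  unfolding nu_def
proof (intro prod_nonneg)
  fix j assume "J \<subseteq> {a+1..n}" "j \<in> J"
  then have "0 \<le> \<delta> j" "\<delta> j < 1" using \<delta>[of j] by auto
  then show "0 \<le> 1 / ((1 - \<delta> j) * real (card (S j)))" by simp
qed

lemma cI_nonneg: "U \<subseteq> {1..a} \<Longrightarrow> cI S a Pa U \<ge> 0"
  using cI_bound[of U "\<lambda>_. undefined"] hyp_def Pa_nonneg
  by (smt (verit, ccfv_SIG) mem_Collect_eq sum_nonneg)

lemma hyp_bound:
  "a + d \<le> n \<Longrightarrow> U \<subseteq> {1..a+d} \<Longrightarrow>
   (\<Sum>x\<in>Qk S (a+d). if x \<in> hyp S (a+d) U w then P (a+d) x else 0)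
     \<le> cI S a Pa (U \<inter> {1..a}) * nu S \<delta> (U \<inter> {a+1..a+d})"
proof (induction d arbitrary: U)
  case 0
  have "(\<Sum>x\<in>Qk S a. if x \<in> hyp S a U w then Pa x else 0) = (\<Sum>x\<in>hyp S a U w. Pa x)"
    unfolding hyp_def using finite_Qk[OF a] by (simp add: sum.inter_filter)
  also have "\<dots> \<le> cI S a Pa U" using 0 by (intro cI_bound) auto
  moreover have "P (a + 0) = Pa" using Pk_a by simp
  moreover have "U \<inter> {1..a} = U" "U \<inter> {a+1..a+0} = {}" using 0 by auto
  ultimately show ?case by (simp add: nu_def cong: if_cong)
next
  case (Suc d)
  define j where "j = a + d"
  have jn: "Suc j \<le> n" "a \<le> j" using Suc.prems j_def by auto
  define U' where "U' = U - {Suc j}"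
  have U'j: "U' \<subseteq> {1..j}" using Suc.prems(2) unfolding U'_def j_def by auto
  have IH: "(\<Sum>x\<in>Qk S j. if x \<in> hyp S j U' w then P j x else 0)
     \<le> cI S a Pa (U' \<inter> {1..a}) * nu S \<delta> (U' \<inter> {a+1..j})"
    using Suc.IH[of U'] U'j jn unfolding j_def by auto
  have finS: "finite (S (Suc j))" using S jn by auto
  have nnP: "x \<in> Qk S j \<Longrightarrow> 0 \<le> P j x" for x using nonneg[of d x] jn unfolding j_def by auto
  have U'a: "U' \<inter> {1..a} = U \<inter> {1..a}" unfolding U'_def using jn by auto
  let ?c = "(1 - \<delta> (Suc j)) * real (card (S (Suc j)))"
  have cpos: "?c > 0" using \<delta>[of "Suc j"] cardS[of "Suc j"] jn by auto
  have "(\<Sum>x\<in>Qk S (a + Suc d). if x \<in> hyp S (a + Suc d) U w then P (a + Suc d) x else 0)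
     = (\<Sum>x\<in>Qk S j. \<Sum>y\<in>S (Suc j). if x(Suc j := y) \<in> hyp S (Suc j) U w
           then P (Suc j) (x(Suc j := y)) else 0)"
    unfolding j_def add_Suc_right
    by (rule sum_Qk_Suc) (use finS finite_Qk jn j_def in auto)
  also have "\<dots> = (\<Sum>x\<in>Qk S j. \<Sum>y\<in>S (Suc j). if x \<in> hyp S j U' w \<and> (Suc j \<in> U \<longrightarrow> y = w (Suc j))
           then P (Suc j) (x(Suc j := y)) else 0)"
    unfolding U'_def by (intro sum.cong refl) (simp add: hyp_upd)
  finally have L: "(\<Sum>x\<in>Qk S (a + Suc d). if x \<in> hyp S (a + Suc d) U w then P (a + Suc d) x else 0)
     = (\<Sum>x\<in>Qk S j. \<Sum>y\<in>S (Suc j). if x \<in> hyp S j U' w \<and> (Suc j \<in> U \<longrightarrow> y = w (Suc j))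
           then P (Suc j) (x(Suc j := y)) else 0)" .
  show ?case
  proof (cases "Suc j \<in> U")
    case True
    have "(\<Sum>x\<in>Qk S j. \<Sum>y\<in>S (Suc j). if x \<in> hyp S j U' w \<and> (Suc j \<in> U \<longrightarrow> y = w (Suc j))
           then P (Suc j) (x(Suc j := y)) else 0)
        \<le> (\<Sum>x\<in>Qk S j. (if x \<in> hyp S j U' w then P j x else 0) / ?c)"
    proof (intro sum_mono)
      fix x assume x: "x \<in> Qk S j"
      show "(\<Sum>y\<in>S (Suc j). if x \<in> hyp S j U' w \<and> (Suc j \<in> U \<longrightarrow> y = w (Suc j))
           then P (Suc j) (x(Suc j := y)) else 0) \<le> (if x \<in> hyp S j U' w then P j x else 0) / ?c"
      proof (cases "x \<in> hyp S j U' w")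
        case True
        have "(\<Sum>y\<in>S (Suc j). if x \<in> hyp S j U' w \<and> (Suc j \<in> U \<longrightarrow> y = w (Suc j))
           then P (Suc j) (x(Suc j := y)) else 0) = (\<Sum>y\<in>S (Suc j). if y = w (Suc j)
           then P (Suc j) (x(Suc j := y)) else 0)" using True \<open>Suc j \<in> U\<close> by (intro sum.cong) auto
        also have "\<dots> = (if w (Suc j) \<in> S (Suc j) then P (Suc j) (x(Suc j := w (Suc j))) else 0)"
          using finS by (simp add: sum.delta')
        also have "\<dots> \<le> P j x / ?c"
          using step_pt[OF jn(2,1) x nnP[OF x]] nnP[OF x] cpos by auto
        finally show ?thesis using True by simp
      qed simp
    qed
    also have "\<dots> = (\<Sum>x\<in>Qk S j. (if x \<in> hyp S j U' w then P j x else 0)) / ?c"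
      by (rule sum_divide_distrib[symmetric])
    also have "\<dots> \<le> cI S a Pa (U' \<inter> {1..a}) * nu S \<delta> (U' \<inter> {a+1..j}) / ?c"
      using IH cpos by (intro divide_right_mono) auto
    also have "\<dots> = cI S a Pa (U \<inter> {1..a}) * nu S \<delta> (U \<inter> {a+1..a + Suc d})"
    proof -
      have "U \<inter> {a+1..a + Suc d} = insert (Suc j) (U' \<inter> {a+1..j})"
        using True jn unfolding U'_def j_def by auto
      then show ?thesis using U'a by (simp add: nu_insert)
    qed
    finally show ?thesis using L by simp
  next
    case False
    have UU: "U' = U" using False unfolding U'_def by auto
    have "(\<Sum>x\<in>Qk S j. \<Sum>y\<in>S (Suc j). if x \<in> hyp S j U' w \<and> (Suc j \<in> U \<longrightarrow> y = w (Suc j))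
           then P (Suc j) (x(Suc j := y)) else 0)
        \<le> (\<Sum>x\<in>Qk S j. (if x \<in> hyp S j U' w then P j x else 0))"
    proof (intro sum_mono)
      fix x assume x: "x \<in> Qk S j"
      show "(\<Sum>y\<in>S (Suc j). if x \<in> hyp S j U' w \<and> (Suc j \<in> U \<longrightarrow> y = w (Suc j))
           then P (Suc j) (x(Suc j := y)) else 0) \<le> (if x \<in> hyp S j U' w then P j x else 0)"
        using step_sum[OF jn(2,1) x nnP[OF x]] False by auto
    qed
    also have "\<dots> \<le> cI S a Pa (U' \<inter> {1..a}) * nu S \<delta> (U' \<inter> {a+1..j})" by (rule IH)
    also have "\<dots> = cI S a Pa (U \<inter> {1..a}) * nu S \<delta> (U \<inter> {a+1..a + Suc d})"
    proof -
      have "U \<inter> {a+1..a + Suc d} = U' \<inter> {a+1..j}"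
        using False jn unfolding U'_def j_def by (auto simp: le_Suc_eq)
      then show ?thesis using U'a by simp
    qed
    finally show ?thesis using L by simp
  qed
qed

end
theorem lemma3p4:
  fixes S :: "nat \<Rightarrow> 'a set" and n a k t :: nat
    and \<F> :: "nat set set" and v :: "nat set \<Rightarrow> nat \<Rightarrow> 'a"
    and \<delta> :: "nat \<Rightarrow> real" and Pa :: "(nat \<Rightarrow> 'a) \<Rightarrow> real"
  assumes S: "\<And>i. i \<in> {1..n} \<Longrightarrow> finite (S i) \<and> card (S i) \<ge> 2"
    and F: "\<And>F. F \<in> \<F> \<Longrightarrow> F \<noteq> {} \<and> F \<subseteq> {1..n}"
    and v: "\<And>F i. F \<in> \<F> \<Longrightarrow> i \<in> F \<Longrightarrow> v F i \<in> S i"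
    and a: "a \<le> n"
    and Pa_nonneg: "\<And>x. x \<in> Qk S a \<Longrightarrow> Pa x \<ge> 0"
    and Pa_sum: "(\<Sum>x\<in>Qk S a. Pa x) = 1"
    and \<delta>: "\<And>j. j \<in> {a+1..n} \<Longrightarrow> 0 \<le> \<delta> j \<and> \<delta> j \<le> 1/2"
    and k: "a < k" "k \<le> n"
  shows "(\<Sum>x\<in>Qk S (k-1). Pk S \<F> v \<delta> a Pa (k-1) x * alpha S \<F> v k x ^ t)
     \<le> 1 / real (card (S k)) ^ t *
       (\<Sum>Fs\<in>PiE {..<t} (\<lambda>_. Nk \<F> k).
          cI S a Pa ((\<Union>i<t. Fs i) \<inter> {1..a}) * nu S \<delta> ((\<Union>i<t. Fs i) \<inter> {a+1..k-1}))"
proof -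
  interpret L3 S n a \<F> v \<delta> Pa
    using S F v a Pa_nonneg \<delta> by unfold_locales auto
  define m where "m = k - 1"
  have km: "k = Suc m" using k unfolding m_def by auto
  have mn: "m \<le> n" "a \<le> m" using k km by auto
  define s where "s = real (card (S k))"
  have spos: "s > 0" unfolding s_def using cardS[of k] k by auto
  define N where "N = Nk \<F> k"
  have finN: "finite N" unfolding N_def Nk_def
    by (rule finite_subset[of _ "Pow {1..k}"]) auto
  have kF: "k \<in> F \<and> F \<subseteq> {1..k}" if "F \<in> N" for F
  proof -
    have "F \<subseteq> {1..k}" "\<not> F \<subseteq> {1..k-1}" using that unfolding N_def Nk_def by auto
    then obtain l where "l \<in> F" "l \<notin> {1..k-1}" "l \<in> {1..k}" by blast
    then have "l = k" by auto
    then show ?thesis using \<open>l \<in> F\<close> \<open>F \<subseteq> {1..k}\<close> by auto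
  qed
  define ind where "ind F x = (if x \<in> hyp S m (F - {k}) (v F) then 1 else (0::real))" for F x
  have nnP: "x \<in> Qk S m \<Longrightarrow> 0 \<le> P m x" for x
    using nonneg[of "m - a" x] mn by auto
  have A: "alpha S \<F> v k x \<le> (\<Sum>F\<in>N. ind F x) / s" if x: "x \<in> Qk S m" for x
  proof -
    define Y where "Y = {y \<in> S k. x(k := y) \<in> Bk S \<F> v k}"
    define G where "G = {F \<in> N. x \<in> hyp S m (F - {k}) (v F)}"
    have "Y \<subseteq> (\<lambda>F. v F k) ` G"
    proof
      fix y assume "y \<in> Y"
      then obtain F where F: "F \<in> N" "x(k := y) \<in> hyp S k F (v F)"
        unfolding Y_def Bk_def N_def by auto
      have "k \<in> F" using kF[OF F(1)] by auto
      then have "y = v F k" using F(2) unfolding hyp_def by force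
      moreover have "x \<in> hyp S m (F - {k}) (v F)"
        using F(2) x unfolding hyp_def by auto metis
      ultimately show "y \<in> (\<lambda>F. v F k) ` G" unfolding G_def using F(1) by auto
    qed
    then have "card Y \<le> card ((\<lambda>F. v F k) ` G)"
      by (intro card_mono finite_imageI) (auto simp: G_def finN)
    also have "\<dots> \<le> card G" by (rule card_image_le) (auto simp: G_def finN)
    finally have cY: "real (card Y) \<le> real (card G)" by simp
    have "(\<Sum>F\<in>N. ind F x) = (\<Sum>F\<in>G. 1)"
      unfolding G_def ind_def by (rule sum.inter_filter[OF finN, symmetric])
    then have "(\<Sum>F\<in>N. ind F x) = real (card G)" by simp
    moreover have "alpha S \<F> v k x = real (card Y) / s" unfolding alpha_def Y_def s_def by simp
    ultimately show ?thesis using cY spos by (simp add: divide_right_mono)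
  qed
  have alnn: "0 \<le> alpha S \<F> v k x" for x
    using alpha_bounds[of m x] km mn k by auto
  define U where "U Fs = (\<Union>i<t. Fs i) - {k}" for Fs :: "nat \<Rightarrow> nat set"
  define W where "W Fs l = v (Fs (SOME i. i < t \<and> l \<in> Fs i)) l" for Fs :: "nat \<Rightarrow> nat set" and l
  have C: "(\<Prod>i<t. ind (Fs i) x) \<le> (if x \<in> hyp S m (U Fs) (W Fs) then 1 else 0)"
    if x: "x \<in> Qk S m" for Fs x
  proof (cases "\<forall>i<t. x \<in> hyp S m (Fs i - {k}) (v (Fs i))")
    case True
    then have "(\<Prod>i<t. ind (Fs i) x) = 1" unfolding ind_def by (intro prod.neutral) auto
    moreover have "x \<in> hyp S m (U Fs) (W Fs)"
      unfolding hyp_def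
    proof (intro CollectI conjI ballI x)
      fix l assume "l \<in> U Fs"
      then have ex: "\<exists>i. i < t \<and> l \<in> Fs i" and lk: "l \<noteq> k" unfolding U_def by auto
      define i where "i = (SOME i. i < t \<and> l \<in> Fs i)"
      have i: "i < t" "l \<in> Fs i" using someI_ex[OF ex] unfolding i_def by auto
      have "x \<in> hyp S m (Fs i - {k}) (v (Fs i))" using True i by auto
      then show "x l = W Fs l" unfolding hyp_def W_def i_def[symmetric] using i lk by auto
    qed
    ultimately show ?thesis by simp
  next
    case False
    then obtain i where i: "i < t" "x \<notin> hyp S m (Fs i - {k}) (v (Fs i))" by auto
    have p0: "(\<Prod>i<t. ind (Fs i) x) = 0"
      by (rule prod_zero) (use i in \<open>auto simp: ind_def\<close>)
    show ?thesis unfolding p0 by simp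
  qed
  let ?PI = "PiE {..<t} (\<lambda>_. N)"
  have "(\<Sum>x\<in>Qk S (k-1). P (k-1) x * alpha S \<F> v k x ^ t)
      \<le> (\<Sum>x\<in>Qk S m. P m x * (1 / s ^ t * (\<Sum>Fs\<in>?PI. \<Prod>i<t. ind (Fs i) x)))"
  proof (unfold m_def[symmetric], intro sum_mono mult_left_mono)
    fix x assume x: "x \<in> Qk S m"
    show "0 \<le> P m x" using nnP[OF x] .
    have "alpha S \<F> v k x ^ t \<le> ((\<Sum>F\<in>N. ind F x) / s) ^ t"
      using A[OF x] alnn by (intro power_mono) auto
    also have "\<dots> = 1 / s ^ t * (\<Prod>i<t. \<Sum>F\<in>N. ind F x)"
      by (simp add: power_divide)
    also have "(\<Prod>i<t. \<Sum>F\<in>N. ind F x) = (\<Sum>Fs\<in>?PI. \<Prod>i<t. ind (Fs i) x)"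
      by (rule prod_sum_PiE) (auto simp: finN)
    finally show "alpha S \<F> v k x ^ t \<le> 1 / s ^ t * (\<Sum>Fs\<in>?PI. \<Prod>i<t. ind (Fs i) x)" .
  qed
  also have "\<dots> = 1 / s ^ t * (\<Sum>Fs\<in>?PI. \<Sum>x\<in>Qk S m. P m x * (\<Prod>i<t. ind (Fs i) x))"
  proof -
    have e: "P m x * (1 / s ^ t * (\<Sum>Fs\<in>?PI. \<Prod>i<t. ind (Fs i) x))
       = 1 / s ^ t * (\<Sum>Fs\<in>?PI. P m x * (\<Prod>i<t. ind (Fs i) x))" for x
    proof -
      have "P m x * (1 / s ^ t * (\<Sum>Fs\<in>?PI. \<Prod>i<t. ind (Fs i) x))
         = 1 / s ^ t * (P m x * (\<Sum>Fs\<in>?PI. \<Prod>i<t. ind (Fs i) x))" by (rule mult.left_commute)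
      then show ?thesis by (simp only: sum_distrib_left)
    qed
    have "(\<Sum>x\<in>Qk S m. P m x * (1 / s ^ t * (\<Sum>Fs\<in>?PI. \<Prod>i<t. ind (Fs i) x)))
       = 1 / s ^ t * (\<Sum>x\<in>Qk S m. \<Sum>Fs\<in>?PI. P m x * (\<Prod>i<t. ind (Fs i) x))"
      unfolding e by (rule sum_distrib_left[symmetric])
    also have "(\<Sum>x\<in>Qk S m. \<Sum>Fs\<in>?PI. P m x * (\<Prod>i<t. ind (Fs i) x))
       = (\<Sum>Fs\<in>?PI. \<Sum>x\<in>Qk S m. P m x * (\<Prod>i<t. ind (Fs i) x))"
      by (rule sum.swap)
    finally show ?thesis .
  qed
  also have "\<dots> \<le> 1 / s ^ t * (\<Sum>Fs\<in>?PI. cI S a Pa ((\<Union>i<t. Fs i) \<inter> {1..a}) *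
        nu S \<delta> ((\<Union>i<t. Fs i) \<inter> {a+1..k-1}))"
  proof (intro mult_left_mono sum_mono)
    fix Fs assume Fs: "Fs \<in> ?PI"
    have "(\<Sum>x\<in>Qk S m. P m x * (\<Prod>i<t. ind (Fs i) x))
        \<le> (\<Sum>x\<in>Qk S m. if x \<in> hyp S m (U Fs) (W Fs) then P m x else 0)"
    proof (intro sum_mono)
      fix x assume x: "x \<in> Qk S m"
      have "P m x * (\<Prod>i<t. ind (Fs i) x) \<le> P m x * (if x \<in> hyp S m (U Fs) (W Fs) then 1 else 0)"
        using C[OF x] nnP[OF x] by (intro mult_left_mono) auto
      then show "P m x * (\<Prod>i<t. ind (Fs i) x) \<le> (if x \<in> hyp S m (U Fs) (W Fs) then P m x else 0)"
        by (simp split: if_splits)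
    qed
    also have "\<dots> \<le> cI S a Pa (U Fs \<inter> {1..a}) * nu S \<delta> (U Fs \<inter> {a+1..a + (m - a)})"
    proof -
      have "U Fs \<subseteq> {1..a + (m - a)}"
      proof
        fix l assume "l \<in> U Fs"
        then obtain i where i: "i < t" "l \<in> Fs i" "l \<noteq> k" unfolding U_def by auto
        have "Fs i \<in> N" using Fs i(1) by (auto simp: PiE_iff)
        then have "l \<in> {1..k}" using kF i(2) by blast
        then show "l \<in> {1..a + (m - a)}" using i(3) km mn by auto
      qed
      from hyp_bound[OF _ this, of "W Fs"] mn show ?thesis by (simp cong: if_cong)
    qed
    also have "U Fs \<inter> {1..a} = (\<Union>i<t. Fs i) \<inter> {1..a}" unfolding U_def using k by auto
    also have "U Fs \<inter> {a+1..a + (m - a)} = (\<Union>i<t. Fs i) \<inter> {a+1..k-1}" unfolding U_def using km mn by auto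
    finally show "(\<Sum>x\<in>Qk S m. P m x * (\<Prod>i<t. ind (Fs i) x)) \<le> cI S a Pa ((\<Union>i<t. Fs i) \<inter> {1..a}) *
        nu S \<delta> ((\<Union>i<t. Fs i) \<inter> {a+1..k-1})" .
  qed (use spos in simp)
  finally show ?thesis unfolding s_def N_def .
qed

end
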